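(* If $\mathscr{F}=(\Omega,\sqsubseteq,\mathcal{E},\mathcal{A},\mathcal{K},\mathcal{B})$ is an epistemic possibility frame, then $\mathscr{F}^+=((\mathcal{E},\subseteq),\mathbf{A},\mathbf{K},\mathbf{B})$ is an epistemic awareness algebra.
   Context: For a poset $(\Omega,\sqsubseteq)$, let $\downarrow E=\{\omega\mid \omega\sqsubseteq\nu\text{ for some }\nu\in E\}$, $\downarrow\nu=\downarrow\{\nu\}$, $\rho(E)=\{\omega\mid \forall\omega'\sqsubseteq\omega\ \exists\omega''\sqsubseteq\omega'\colon \omega''\in\downarrow E\}$; $\mathcal{RO}(\Omega,\sqsubseteq)=\{E\mid\rho(E)=E\}$, a Boolean algebra under $\subseteq$ with meet $\cap$, join $E\sqcup F=\rho(E\cup F)$, complement $\neg E=\{\omega\mid\forall\omega'\sqsubseteq\omega,\ \omega'\notin E\}$. $\max(E)=\{\omega\in E\mid\text{no }\nu\in E\text{ with }\omega\sqsubseteq\nu,\ \nu\not\sqsubseteq\omega\}$. A possibility frame $(\Omega,\sqsubseteq,\mathcal{E})$ has $\mathcal{E}\subseteq\mathcal{RO}(\Omega,\sqsubseteq)$ nonempty, closed under binary $\cap$ and $\neg$; quasi-principal means: for all $E\in\mathcal{E}$, $\omega\in E$, $\omega\in\downarrow\max(E)$. A possibility frame with awareness $(\Omega,\sqsubseteq,\mathcal{E},\mathcal{A})$: $(\Omega,\sqsubseteq,\mathcal{E})$ quasi-principal with maximum element $m$; $\mathcal{A}:\Omega\to\wp(\Omega)$ with, for all $\omega,\omega',\nu$: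 $m\in\mathcal{A}(\omega)$; $\nu\in\mathcal{A}(\omega)\Rightarrow\downarrow\nu\in\mathcal{E}$; $\omega'\sqsubseteq\omega\Rightarrow\mathcal{A}(\omega)\subseteq\mathcal{A}(\omega')$; $\nu\notin\mathcal{A}(\omega)\Rightarrow\exists\omega'\sqsubseteq\omega\ \forall\omega''\sqsubseteq\omega'\ \nu\notin\mathcal{A}(\omega'')$; if $\nu\in\mathcal{A}(\omega)$, $E,E'\in\mathcal{E}$ and $\max(E\cap\downarrow\nu)\cup\max(E'\cap\downarrow\nu)\subseteq\mathcal{A}(\omega)$ then $\max((E\sqcup E')\cap\downarrow\nu)\subseteq\mathcal{A}(\omega)$; and $\mathcal{E}$ is closed under $\mathbf{A}$, where $\omega\in\mathbf{A}(E)$ iff $\forall\omega'\sqsubseteq\omega\ \forall\nu\in\mathcal{A}(\omega')$: $\max(E\cap\downarrow\nu)\cup\max(\neg E\cap\downarrow\nu)\subseteq\mathcal{A}(\omega')$. An epistemic possibility frame $(\Omega,\sqsubseteq,\mathcal{E},\mathcal{A},\mathcal{K},\mathcal{B})$ adds $\mathcal{K},\mathcal{B}:\Omega\to\wp(\Omega)$ such that for $\mathcal{R}\in\{\mathcal{K},\mathcal{B}\}$: $\omega'\sqsubseteq\omega\Rightarrow\mathcal{R}(\omega')\subseteq\mathcal{R}(\omega)$; $\mathcal{R}(\omega)\in\mathcal{RO}(\Omega,\sqsubseteq)$; $\nu\in\mathcal{R}(\omega)\Rightarrow\exists\omega'\sqsubseteq\omega\ \forall\omega''\sqsubseteq\omega'\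 \exists\nu'\sqsubseteq\nu\colon\nu'\in\mathcal{R}(\omega'')$; $\omega\in\mathcal{K}(\omega)$; $\mathcal{B}(\omega)\neq\varnothing$; $\mathcal{B}(\omega)\subseteq\mathcal{K}(\omega)$; and $\{\omega\mid\mathcal{R}(\omega)\subseteq E\}\in\mathcal{E}$ for $E\in\mathcal{E}$. Define $\mathbf{K}(E)=\{\omega\mid\mathcal{K}(\omega)\subseteq E,\ \omega\in\mathbf{A}(E)\}$, $\mathbf{B}(E)=\{\omega\mid\mathcal{B}(\omega)\subseteq E,\ \omega\in\mathbf{A}(E)\}$. An epistemic awareness algebra is $(\mathbb{B},A,K,B)$, $\mathbb{B}$ a Boolean algebra, $A,K,B$ unary operations such that for all $a,b$ and $\Box\in\{K,B\}$: $A1=1$; $Aa=A\neg a$; $Aa\sqcap Ab\le A(a\sqcap b)$; $K1=1$; $\Box a\sqcap\Box b\le\Box(a\sqcap b)$; if $a\le b$ then $\Box a\sqcap Ab\le\Box b$; $Ka\le a$; $B0=0$; $Ka\le Ba$; $Ba\le Aa$. *)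

theory Defs
  imports Main
begin

(* The set of possibilities Omega is represented by the whole type 'a;
   the refinement order is le (le w v means w \<sqsubseteq> v). *)

definition poset :: "('a \<Rightarrow> 'a \<Rightarrow> bool) \<Rightarrow> bool" where
  "poset le \<longleftrightarrow> (\<forall>x. le x x) \<and> (\<forall>x y z. le x y \<longrightarrow> le y z \<longrightarrow> le x z)
      \<and> (\<forall>x y. le x y \<longrightarrow> le y x \<longrightarrow> x = y)"

definition down :: "('a \<Rightarrow> 'a \<Rightarrow> bool) \<Rightarrow> 'a set \<Rightarrow> 'a set" where
  "down le E = {w. \<exists>v\<in>E. le w v}"

definition rho :: "('a \<Rightarrow> 'a \<Rightarrow> bool) \<Rightarrow> 'a set \<Rightarrow> 'a set" where
  "rho le E = {w. \<forall>w'. le w' w \<longrightarrow> (\<exists>w''. le w'' w' \<and> w'' \<in> down le E)}"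

definition RO :: "('a \<Rightarrow> 'a \<Rightarrow> bool) \<Rightarrow> 'a set set" where
  "RO le = {E. rho le E = E}"

definition rojoin :: "('a \<Rightarrow> 'a \<Rightarrow> bool) \<Rightarrow> 'a set \<Rightarrow> 'a set \<Rightarrow> 'a set" where
  "rojoin le E F = rho le (E \<union> F)"

definition roneg :: "('a \<Rightarrow> 'a \<Rightarrow> bool) \<Rightarrow> 'a set \<Rightarrow> 'a set" where
  "roneg le E = {w. \<forall>w'. le w' w \<longrightarrow> w' \<notin> E}"

definition maxs :: "('a \<Rightarrow> 'a \<Rightarrow> bool) \<Rightarrow> 'a set \<Rightarrow> 'a set" where
  "maxs le E = {w\<in>E. \<not> (\<exists>v\<in>E. le w v \<and> \<not> le v w)}"

definition poss_frame :: "('a \<Rightarrow> 'a \<Rightarrow> bool) \<Rightarrow> 'a set set \<Rightarrow> bool" where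
  "poss_frame le Ev \<longleftrightarrow> poset le \<and> Ev \<subseteq> RO le \<and> Ev \<noteq> {}
      \<and> (\<forall>E\<in>Ev. \<forall>F\<in>Ev. E \<inter> F \<in> Ev) \<and> (\<forall>E\<in>Ev. roneg le E \<in> Ev)"

definition quasi_principal :: "('a \<Rightarrow> 'a \<Rightarrow> bool) \<Rightarrow> 'a set set \<Rightarrow> bool" where
  "quasi_principal le Ev \<longleftrightarrow> (\<forall>E\<in>Ev. \<forall>w\<in>E. w \<in> down le (maxs le E))"

definition aw_op :: "('a \<Rightarrow> 'a \<Rightarrow> bool) \<Rightarrow> ('a \<Rightarrow> 'a set) \<Rightarrow> 'a set \<Rightarrow> 'a set" where
  "aw_op le Aw E = {w. \<forall>w'. le w' w \<longrightarrow> (\<forall>\<nu>\<in>Aw w'.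
       maxs le (E \<inter> down le {\<nu>}) \<union> maxs le (roneg le E \<inter> down le {\<nu>}) \<subseteq> Aw w')}"

definition aw_frame :: "('a \<Rightarrow> 'a \<Rightarrow> bool) \<Rightarrow> 'a set set \<Rightarrow> ('a \<Rightarrow> 'a set) \<Rightarrow> bool" where
  "aw_frame le Ev Aw \<longleftrightarrow> poss_frame le Ev \<and> quasi_principal le Ev \<and>
    (\<exists>m. (\<forall>w. le w m) \<and>
      (\<forall>w. m \<in> Aw w) \<and>
      (\<forall>w \<nu>. \<nu> \<in> Aw w \<longrightarrow> down le {\<nu>} \<in> Ev) \<and>
      (\<forall>w w'. le w' w \<longrightarrow> Aw w \<subseteq> Aw w') \<and>
      (\<forall>w \<nu>. \<nu> \<notin> Aw w \<longrightarrow> (\<exists>w'. le w' w \<and> (\<forall>w''. le w'' w' \<longrightarrow> \<nu> \<notin> Aw w''))) \<and>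
      (\<forall>w \<nu> E E'. \<nu> \<in> Aw w \<longrightarrow> E \<in> Ev \<longrightarrow> E' \<in> Ev \<longrightarrow>
          maxs le (E \<inter> down le {\<nu>}) \<union> maxs le (E' \<inter> down le {\<nu>}) \<subseteq> Aw w \<longrightarrow>
          maxs le (rojoin le E E' \<inter> down le {\<nu>}) \<subseteq> Aw w) \<and>
      (\<forall>E\<in>Ev. aw_op le Aw E \<in> Ev))"

definition rel_ok :: "('a \<Rightarrow> 'a \<Rightarrow> bool) \<Rightarrow> 'a set set \<Rightarrow> ('a \<Rightarrow> 'a set) \<Rightarrow> bool" where
  "rel_ok le Ev R \<longleftrightarrow>
     (\<forall>w w'. le w' w \<longrightarrow> R w' \<subseteq> R w) \<and>
     (\<forall>w. R w \<in> RO le) \<and>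
     (\<forall>w \<nu>. \<nu> \<in> R w \<longrightarrow> (\<exists>w'. le w' w \<and> (\<forall>w''. le w'' w' \<longrightarrow> (\<exists>\<nu>'. le \<nu>' \<nu> \<and> \<nu>' \<in> R w'')))) \<and>
     (\<forall>E\<in>Ev. {w. R w \<subseteq> E} \<in> Ev)"

definition epistemic_frame ::
  "('a \<Rightarrow> 'a \<Rightarrow> bool) \<Rightarrow> 'a set set \<Rightarrow> ('a \<Rightarrow> 'a set) \<Rightarrow> ('a \<Rightarrow> 'a set) \<Rightarrow> ('a \<Rightarrow> 'a set) \<Rightarrow> bool" where
  "epistemic_frame le Ev Aw Kr Br \<longleftrightarrow> aw_frame le Ev Aw \<and> rel_ok le Ev Kr \<and> rel_ok le Ev Br \<and>
     (\<forall>w. w \<in> Kr w) \<and> (\<forall>w. Br w \<noteq> {}) \<and> (\<forall>w. Br w \<subseteq> Kr w)"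

definition modal_op :: "('a \<Rightarrow> 'a \<Rightarrow> bool) \<Rightarrow> ('a \<Rightarrow> 'a set) \<Rightarrow> ('a \<Rightarrow> 'a set) \<Rightarrow> 'a set \<Rightarrow> 'a set" where
  "modal_op le Aw R E = {w. R w \<subseteq> E \<and> w \<in> aw_op le Aw E}"

definition bool_alg ::
  "'b set \<Rightarrow> ('b \<Rightarrow> 'b \<Rightarrow> bool) \<Rightarrow> ('b \<Rightarrow> 'b \<Rightarrow> 'b) \<Rightarrow> ('b \<Rightarrow> 'b \<Rightarrow> 'b) \<Rightarrow> ('b \<Rightarrow> 'b)
    \<Rightarrow> 'b \<Rightarrow> 'b \<Rightarrow> bool" where
  "bool_alg C leq meet join cmp zero one \<longleftrightarrow>
     zero \<in> C \<and> one \<in> C \<and>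
     (\<forall>a\<in>C. \<forall>b\<in>C. meet a b \<in> C \<and> join a b \<in> C) \<and> (\<forall>a\<in>C. cmp a \<in> C) \<and>
     (\<forall>a\<in>C. leq a a) \<and> (\<forall>a\<in>C. \<forall>b\<in>C. \<forall>c\<in>C. leq a b \<longrightarrow> leq b c \<longrightarrow> leq a c) \<and>
     (\<forall>a\<in>C. \<forall>b\<in>C. leq a b \<longrightarrow> leq b a \<longrightarrow> a = b) \<and>
     (\<forall>a\<in>C. \<forall>b\<in>C. \<forall>c\<in>C. leq c (meet a b) \<longleftrightarrow> leq c a \<and> leq c b) \<and>
     (\<forall>a\<in>C. \<forall>b\<in>C. \<forall>c\<in>C. leq (join a b) c \<longleftrightarrow> leq a c \<and> leq b c) \<and>
     (\<forall>a\<in>C. leq zero a \<and> leq a one) \<and>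
     (\<forall>a\<in>C. \<forall>b\<in>C. \<forall>c\<in>C. meet a (join b c) = join (meet a b) (meet a c)) \<and>
     (\<forall>a\<in>C. meet a (cmp a) = zero \<and> join a (cmp a) = one)"

definition ea_algebra ::
  "'b set \<Rightarrow> ('b \<Rightarrow> 'b \<Rightarrow> bool) \<Rightarrow> ('b \<Rightarrow> 'b \<Rightarrow> 'b) \<Rightarrow> ('b \<Rightarrow> 'b \<Rightarrow> 'b) \<Rightarrow> ('b \<Rightarrow> 'b)
    \<Rightarrow> 'b \<Rightarrow> 'b \<Rightarrow> ('b \<Rightarrow> 'b) \<Rightarrow> ('b \<Rightarrow> 'b) \<Rightarrow> ('b \<Rightarrow> 'b) \<Rightarrow> bool" where
  "ea_algebra C leq meet join cmp zero one A K B \<longleftrightarrow>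
     bool_alg C leq meet join cmp zero one \<and>
     (\<forall>a\<in>C. A a \<in> C \<and> K a \<in> C \<and> B a \<in> C) \<and>
     A one = one \<and>
     (\<forall>a\<in>C. A a = A (cmp a)) \<and>
     (\<forall>a\<in>C. \<forall>b\<in>C. leq (meet (A a) (A b)) (A (meet a b))) \<and>
     K one = one \<and>
     (\<forall>Bx\<in>{K, B}. \<forall>a\<in>C. \<forall>b\<in>C. leq (meet (Bx a) (Bx b)) (Bx (meet a b))) \<and>
     (\<forall>Bx\<in>{K, B}. \<forall>a\<in>C. \<forall>b\<in>C. leq a b \<longrightarrow> leq (meet (Bx a) (A b)) (Bx b)) \<and>
     (\<forall>a\<in>C. leq (K a) a) \<and>
     B zero = zero \<and>
     (\<forall>a\<in>C. leq (K a) (B a)) \<and>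
     (\<forall>a\<in>C. leq (B a) (A a))"

end

theory Submission
  imports Defs
begin

definition dcl :: "('a \<Rightarrow> 'a \<Rightarrow> bool) \<Rightarrow> 'a set \<Rightarrow> bool" where
  "dcl le E \<longleftrightarrow> (\<forall>x y. le x y \<longrightarrow> y \<in> E \<longrightarrow> x \<in> E)"

lemma P_refl: "poset le \<Longrightarrow> le x x" unfolding poset_def by blast
lemma P_trans: "poset le \<Longrightarrow> le x y \<Longrightarrow> le y z \<Longrightarrow> le x z" unfolding poset_def by blast
lemma P_anti: "poset le \<Longrightarrow> le x y \<Longrightarrow> le y x \<Longrightarrow> x = y" unfolding poset_def by blast

lemma RO_dcl: assumes "poset le" "E \<in> RO le" shows "dcl le E"
proof -
  have "E = rho le E" using assms(2) by (simp add: RO_def)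
  show ?thesis unfolding dcl_def
  proof (intro allI impI)
    fix x y assume "le x y" "y \<in> E"
    then have "y \<in> rho le E" using \<open>E = rho le E\<close> by simp
    then have "x \<in> rho le E" unfolding rho_def using P_trans[OF assms(1) _ \<open>le x y\<close>] by blast
    then show "x \<in> E" using \<open>E = rho le E\<close> by simp
  qed
qed

lemma roneg_dcl: assumes "poset le" shows "dcl le (roneg le E)"
  unfolding dcl_def roneg_def using P_trans[OF assms] by blast

lemma down_dcl: assumes "poset le" "dcl le E" shows "down le E = E"
  using assms P_refl[OF assms(1)] unfolding dcl_def down_def by blast

lemma rho_dcl: assumes "poset le" "dcl le E"
  shows "rho le E = {w. \<forall>w'. le w' w \<longrightarrow> (\<exists>w''. le w'' w' \<and> w'' \<in> E)}"
  unfolding rho_def down_dcl[OF assms] ..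

lemma roneg_roneg: assumes "poset le" "E \<in> RO le" shows "roneg le (roneg le E) = E"
proof -
  have d: "dcl le E" using RO_dcl assms by blast
  have "roneg le (roneg le E) = rho le E"
    unfolding rho_dcl[OF assms(1) d] roneg_def by blast
  then show ?thesis using assms(2) by (simp add: RO_def)
qed

lemma rojoin_eq: assumes "poset le" "dcl le E" "dcl le F"
  shows "rojoin le E F = roneg le (roneg le E \<inter> roneg le F)"
proof -
  have "dcl le (E \<union> F)" using assms unfolding dcl_def by blast
  then show ?thesis unfolding rojoin_def rho_dcl[OF assms(1) \<open>dcl le (E \<union> F)\<close>] roneg_def
    by blast
qed

lemma roneg_inter: assumes "poset le" "E \<in> RO le" "F \<in> RO le"
  shows "roneg le (E \<inter> F) = rojoin le (roneg le E) (roneg le F)"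
  using rojoin_eq[OF assms(1) roneg_dcl[OF assms(1)] roneg_dcl[OF assms(1)]]
    roneg_roneg[OF assms(1,2)] roneg_roneg[OF assms(1,3)] by simp

lemma maxs_down1: assumes "poset le" shows "maxs le (down le {v}) = {v}"
  unfolding maxs_def down_def using P_refl[OF assms] P_anti[OF assms] by blast

lemma roneg_UNIV: assumes "poset le" shows "roneg le UNIV = {}"
  unfolding roneg_def using P_refl[OF assms] by blast

lemma roneg_empty: "roneg le {} = UNIV"
  unfolding roneg_def by blast

lemma aw_UNIV: assumes "poset le" shows "aw_op le Aw UNIV = UNIV"
proof -
  have "maxs le {} = {}" unfolding maxs_def by blast
  then show ?thesis unfolding aw_op_def roneg_UNIV[OF assms] using maxs_down1[OF assms] by auto
qed

lemma aw_neg: assumes "poset le" "E \<in> RO le" shows "aw_op le Aw (roneg le E) = aw_op le Aw E"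
  unfolding aw_op_def roneg_roneg[OF assms] by blast

lemma aw_inter:
  assumes fr: "aw_frame le Ev Aw" and E: "E \<in> Ev" and F: "F \<in> Ev"
  shows "aw_op le Aw E \<inter> aw_op le Aw F \<subseteq> aw_op le Aw (E \<inter> F)"
proof
  fix w assume w: "w \<in> aw_op le Aw E \<inter> aw_op le Aw F"
  have pf: "poss_frame le Ev" and qp: "quasi_principal le Ev" using fr by (auto simp: aw_frame_def)
  have P: "poset le" using pf by (simp add: poss_frame_def)
  have ERO: "E \<in> RO le" and FRO: "F \<in> RO le" using pf E F by (auto simp: poss_frame_def)
  have dE: "dcl le E" using RO_dcl P ERO by blast
  have nE: "roneg le E \<in> Ev" and nF: "roneg le F \<in> Ev" and cap: "\<And>X Y. X \<in> Ev \<Longrightarrow> Y \<in> Ev \<Longrightarrow> X \<inter> Y \<in> Ev"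
    using pf E F by (auto simp: poss_frame_def)
  obtain m where
    dv: "\<forall>w \<nu>. \<nu> \<in> Aw w \<longrightarrow> down le {\<nu>} \<in> Ev" and
    jn: "\<forall>w \<nu> E E'. \<nu> \<in> Aw w \<longrightarrow> E \<in> Ev \<longrightarrow> E' \<in> Ev \<longrightarrow>
          maxs le (E \<inter> down le {\<nu>}) \<union> maxs le (E' \<inter> down le {\<nu>}) \<subseteq> Aw w \<longrightarrow>
          maxs le (rojoin le E E' \<inter> down le {\<nu>}) \<subseteq> Aw w"
    using fr unfolding aw_frame_def by blast
  show "w \<in> aw_op le Aw (E \<inter> F)"
    unfolding aw_op_def
  proof (intro CollectI allI impI ballI)
    fix w' \<nu> assume w': "le w' w" and nu: "\<nu> \<in> Aw w'"
    have AE: "maxs le (E \<inter> down le {\<nu>}) \<union> maxs le (roneg le E \<inter> down le {\<nu>}) \<subseteq> Aw w'"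
      using w w' nu unfolding aw_op_def by blast
    have AF: "\<And>y. y \<in> Aw w' \<Longrightarrow> maxs le (F \<inter> down le {y}) \<union> maxs le (roneg le F \<inter> down le {y}) \<subseteq> Aw w'"
      using w w' unfolding aw_op_def by blast
    have part1: "maxs le (E \<inter> F \<inter> down le {\<nu>}) \<subseteq> Aw w'"
    proof
      fix x assume x: "x \<in> maxs le (E \<inter> F \<inter> down le {\<nu>})"
      have xE: "x \<in> E \<inter> down le {\<nu>}" using x unfolding maxs_def by blast
      have "E \<inter> down le {\<nu>} \<in> Ev" using cap E dv nu by blast
      then have "x \<in> down le (maxs le (E \<inter> down le {\<nu>}))" using qp xE unfolding quasi_principal_def by blast
      then obtain y where y: "y \<in> maxs le (E \<inter> down le {\<nu>})" and xy: "le x y" unfolding down_def by blast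
      have yA: "y \<in> Aw w'" using y AE by blast
      have yE: "y \<in> E" "le y \<nu>" using y unfolding maxs_def down_def by auto
      have "x \<in> maxs le (F \<inter> down le {y})"
      proof -
        have "x \<in> F \<inter> down le {y}" using x xy unfolding maxs_def down_def by auto
        moreover have "\<forall>v\<in>F \<inter> down le {y}. le x v \<longrightarrow> le v x"
        proof (intro ballI impI)
          fix v assume v: "v \<in> F \<inter> down le {y}" "le x v"
          have "le v y" using v unfolding down_def by auto
          then have "v \<in> E \<inter> F \<inter> down le {\<nu>}" using v yE dE P_trans[OF P] unfolding dcl_def down_def by blast
          then show "le v x" using x v unfolding maxs_def by blast
        qed
        ultimately show ?thesis unfolding maxs_def by blast
      qed
      then show "x \<in> Aw w'" using AF[OF yA] by blast
    qed
    have part2: "maxs le (roneg le (E \<inter> F) \<inter> down le {\<nu>}) \<subseteq> Aw w'"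
    proof -
      have "maxs le (roneg le F \<inter> down le {\<nu>}) \<subseteq> Aw w'" using AF[OF nu] by blast
      then have "maxs le (rojoin le (roneg le E) (roneg le F) \<inter> down le {\<nu>}) \<subseteq> Aw w'"
        using jn nu nE nF AE by blast
      then show ?thesis using roneg_inter[OF P ERO FRO] by simp
    qed
    show "maxs le (E \<inter> F \<inter> down le {\<nu>}) \<union> maxs le (roneg le (E \<inter> F) \<inter> down le {\<nu>}) \<subseteq> Aw w'"
      using part1 part2 by blast
  qed
qed

theorem proposition4p3:
  fixes le :: "'a \<Rightarrow> 'a \<Rightarrow> bool"
    and Ev :: "'a set set"
    and Aw Kr Br :: "'a \<Rightarrow> 'a set"
  assumes "epistemic_frame le Ev Aw Kr Br"
  shows "ea_algebra Ev (\<subseteq>) (\<inter>) (rojoin le) (roneg le) {} UNIV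
           (aw_op le Aw) (modal_op le Aw Kr) (modal_op le Aw Br)"
proof -
  have fr: "aw_frame le Ev Aw" and rK: "rel_ok le Ev Kr" and rB: "rel_ok le Ev Br"
    and Kw: "\<And>w. w \<in> Kr w" and Bne: "\<And>w. Br w \<noteq> {}" and BK: "\<And>w. Br w \<subseteq> Kr w"
    using assms unfolding epistemic_frame_def by auto
  have pf: "poss_frame le Ev" using fr by (simp add: aw_frame_def)
  have P: "poset le" using pf by (simp add: poss_frame_def)
  have RO: "\<And>E. E \<in> Ev \<Longrightarrow> E \<in> RO le" using pf by (auto simp: poss_frame_def)
  have cap: "\<And>X Y. X \<in> Ev \<Longrightarrow> Y \<in> Ev \<Longrightarrow> X \<inter> Y \<in> Ev"
    and neg: "\<And>X. X \<in> Ev \<Longrightarrow> roneg le X \<in> Ev" and ne: "Ev \<noteq> {}"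
    using pf by (auto simp: poss_frame_def)
  have dc: "\<And>E. E \<in> Ev \<Longrightarrow> dcl le E" using RO RO_dcl P by blast
  have awc: "\<And>E. E \<in> Ev \<Longrightarrow> aw_op le Aw E \<in> Ev" using fr unfolding aw_frame_def by blast
  have Rc: "\<And>E R. rel_ok le Ev R \<Longrightarrow> E \<in> Ev \<Longrightarrow> modal_op le Aw R E \<in> Ev"
  proof -
    fix E R assume "rel_ok le Ev R" "E \<in> Ev"
    then have "{w. R w \<subseteq> E} \<in> Ev" unfolding rel_ok_def by blast
    moreover have "modal_op le Aw R E = {w. R w \<subseteq> E} \<inter> aw_op le Aw E"
      unfolding modal_op_def by blast
    ultimately show "modal_op le Aw R E \<in> Ev" using cap awc \<open>E \<in> Ev\<close> by simp
  qed
  have empty: "{} \<in> Ev"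
  proof -
    obtain E where E: "E \<in> Ev" using ne by blast
    have "E \<inter> roneg le E = {}" unfolding roneg_def using P_refl[OF P] by blast
    then show ?thesis using cap neg E by metis
  qed
  have univ: "UNIV \<in> Ev" using neg[OF empty] roneg_empty by metis
  have joinc: "\<And>E F. E \<in> Ev \<Longrightarrow> F \<in> Ev \<Longrightarrow> rojoin le E F \<in> Ev"
    using rojoin_eq[OF P] dc cap neg by simp
  have joinlub: "\<And>E F G. E \<in> Ev \<Longrightarrow> F \<in> Ev \<Longrightarrow> G \<in> Ev \<Longrightarrow>
       rojoin le E F \<subseteq> G \<longleftrightarrow> E \<subseteq> G \<and> F \<subseteq> G"
  proof -
    fix E F G assume EFG: "E \<in> Ev" "F \<in> Ev" "G \<in> Ev"
    have sub: "E \<union> F \<subseteq> rojoin le E F"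
      unfolding rojoin_def rho_def down_def using P_refl[OF P] by blast
    have "E \<subseteq> G \<Longrightarrow> F \<subseteq> G \<Longrightarrow> rojoin le E F \<subseteq> G"
    proof -
      assume "E \<subseteq> G" "F \<subseteq> G"
      then have "rojoin le E F \<subseteq> rho le G" unfolding rojoin_def rho_def down_def by blast
      then show ?thesis using RO[OF EFG(3)] by (simp add: RO_def)
    qed
    then show "rojoin le E F \<subseteq> G \<longleftrightarrow> E \<subseteq> G \<and> F \<subseteq> G" using sub by blast
  qed
  have distr: "\<And>E F G. E \<in> Ev \<Longrightarrow> F \<in> Ev \<Longrightarrow> G \<in> Ev \<Longrightarrow>
      E \<inter> rojoin le F G = rojoin le (E \<inter> F) (E \<inter> G)"
  proof -
    fix E F G assume EFG: "E \<in> Ev" "F \<in> Ev" "G \<in> Ev"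
    have dE: "dcl le E" "dcl le F" "dcl le G" using dc EFG by auto
    have dFG: "dcl le (F \<union> G)" "dcl le ((E \<inter> F) \<union> (E \<inter> G))" using dE unfolding dcl_def by blast+
    have rE: "rho le E = E" using RO[OF EFG(1)] by (simp add: RO_def)
    show "E \<inter> rojoin le F G = rojoin le (E \<inter> F) (E \<inter> G)"
      unfolding rojoin_def rho_dcl[OF P dFG(1)] rho_dcl[OF P dFG(2)]
    proof (intro equalityI subsetI)
      fix x assume x: "x \<in> E \<inter> {w. \<forall>w'. le w' w \<longrightarrow> (\<exists>w''. le w'' w' \<and> w'' \<in> F \<union> G)}"
      show "x \<in> {w. \<forall>w'. le w' w \<longrightarrow> (\<exists>w''. le w'' w' \<and> w'' \<in> E \<inter> F \<union> E \<inter> G)}"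
      proof (intro CollectI allI impI)
        fix w' assume "le w' x"
        then obtain w'' where "le w'' w'" "w'' \<in> F \<union> G" using x by blast
        moreover have "w'' \<in> E" using x \<open>le w' x\<close> \<open>le w'' w'\<close> dE(1) P_trans[OF P] unfolding dcl_def by blast
        ultimately show "\<exists>w''. le w'' w' \<and> w'' \<in> E \<inter> F \<union> E \<inter> G" by blast
      qed
    next
      fix x assume x: "x \<in> {w. \<forall>w'. le w' w \<longrightarrow> (\<exists>w''. le w'' w' \<and> w'' \<in> E \<inter> F \<union> E \<inter> G)}"
      have "x \<in> rho le E" unfolding rho_dcl[OF P dE(1)] using x by blast
      then show "x \<in> E \<inter> {w. \<forall>w'. le w' w \<longrightarrow> (\<exists>w''. le w'' w' \<and> w'' \<in> F \<union> G)}"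
        using rE x by blast
    qed
  qed
  have compl: "\<And>E. E \<in> Ev \<Longrightarrow> E \<inter> roneg le E = {} \<and> rojoin le E (roneg le E) = UNIV"
  proof -
    fix E assume E: "E \<in> Ev"
    have "E \<inter> roneg le E = {}" unfolding roneg_def using P_refl[OF P] by blast
    moreover have "rojoin le E (roneg le E) = UNIV"
      unfolding rojoin_def rho_def down_def roneg_def using P_refl[OF P] by blast
    ultimately show "E \<inter> roneg le E = {} \<and> rojoin le E (roneg le E) = UNIV" by blast
  qed
  have BA: "bool_alg Ev (\<subseteq>) (\<inter>) (rojoin le) (roneg le) {} UNIV"
    unfolding bool_alg_def
    apply (intro conjI ballI)
    using empty univ cap joinc neg joinlub distr compl by (simp_all, blast)
  have boxmeet: "\<And>R E F. E \<in> Ev \<Longrightarrow> F \<in> Ev \<Longrightarrow>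
      modal_op le Aw R E \<inter> modal_op le Aw R F \<subseteq> modal_op le Aw R (E \<inter> F)"
    using aw_inter[OF fr] unfolding modal_op_def by blast
  have boxmono: "\<And>R E F. E \<subseteq> F \<Longrightarrow>
      modal_op le Aw R E \<inter> aw_op le Aw F \<subseteq> modal_op le Aw R F"
    unfolding modal_op_def by blast
  have K1: "modal_op le Aw Kr UNIV = UNIV"
    unfolding modal_op_def aw_UNIV[OF P] by blast
  have B0: "modal_op le Aw Br {} = {}"
    unfolding modal_op_def using Bne by blast
  show ?thesis
    unfolding ea_algebra_def
    apply (intro conjI ballI)
    subgoal using BA .
    subgoal using awc by blast
    subgoal using Rc[OF rK] by blast
    subgoal using Rc[OF rB] by blast
    subgoal using aw_UNIV[OF P] .
    subgoal using aw_neg[OF P RO] by metis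
    subgoal using aw_inter[OF fr] by blast
    subgoal using K1 .
    subgoal using boxmeet by blast
    subgoal using boxmono by blast
    subgoal using Kw unfolding modal_op_def by blast
    subgoal using B0 .
    subgoal using BK unfolding modal_op_def by blast
    subgoal unfolding modal_op_def by blast
    done
qed

end
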